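(* For every $\gamma>0$ and every $m\ge0$, $\kappa_m\le\frac32$.
   Context: Fix $\gamma>0$. $\nu^{\gamma}(dx)=x^{\gamma-1}e^{-x}\Gamma(\gamma)^{-1}dx$ on $(0,\infty)$; $\mathcal{S}_{\mathcal{E},N}=\{x\in(0,\infty)^N:\frac1N\sum_i x_i=\mathcal{E}\}$; $\nu_{\mathcal{E},N}=\nu^\gamma_{\mathcal{E},N}$ is the conditional law of $(\nu^\gamma)^{\otimes N}$ on $\mathcal{S}_{\mathcal{E},N}$. $\mu^\gamma$ is the Beta$(\gamma,\gamma)$ law on $[0,1]$. $T_{i,j,\alpha}x$ replaces $x_i$ by $\alpha(x_i+x_j)$ and $x_j$ by $(1-\alpha)(x_i+x_j)$. $E_{i,j}f(x)=\int\mu^\gamma(d\alpha)f(T_{i,j,\alpha}x)$, $D_{i,j}f=E_{i,j}f-f$. $\mathcal{D}^{*,m}_{\mathcal{E},N}(f)=\sum_{i=1}^{N-1}E_{\nu_{\mathcal{E},N}}[(x_i+x_{i+1})^m(D_{i,i+1}f)^2]$; $\lambda^{*,m}(\mathcal{E},N)$ is the infimum of $\mathcal{D}^{*,m}_{\mathcal{E},N}(f)/E_{\nu_{\mathcal{E},N}}[f^2]$ over nonzero mean-zero $f\in L^2(\nu_{\mathcal{E},N})$; $\kappa_m=\lambda^{*,m}(\frac13,3)$. *)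

theory Defs
  imports "HOL-Analysis.Analysis"
begin

text \<open>Points of (0,\<infinity>)^N are functions nat => real on the index set {1..N}
  (extensional, i.e. elements of PiE {1..N} UNIV).\<close>

definition gamma_dens :: "real \<Rightarrow> real \<Rightarrow> real" where
  "gamma_dens \<gamma> x = (if 0 < x then x powr (\<gamma> - 1) * exp (- x) / Gamma \<gamma> else 0)"

definition simplexS :: "real \<Rightarrow> nat \<Rightarrow> (nat \<Rightarrow> real) set" where
  "simplexS E N = {x \<in> PiE {1..N} (\<lambda>_. UNIV).
      (\<forall>i\<in>{1..N}. 0 < x i) \<and> (\<Sum>i\<in>{1..N}. x i) / real N = E}"

definition hyp_param :: "real \<Rightarrow> nat \<Rightarrow> (nat \<Rightarrow> real) \<Rightarrow> (nat \<Rightarrow> real)" where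
  "hyp_param E N y = (\<lambda>i. if i \<in> {1..<N} then y i
       else if i = N then real N * E - (\<Sum>j\<in>{1..<N}. y j) else undefined)"

text \<open>Unnormalised conditional law: product density (nu^gamma)^N restricted to the
  hyperplane, w.r.t. the Lebesgue (surface) measure on the hyperplane, realised via
  the coordinate chart hyp_param.\<close>
definition nu_unnorm :: "real \<Rightarrow> real \<Rightarrow> nat \<Rightarrow> (nat \<Rightarrow> real) measure" where
  "nu_unnorm \<gamma> E N =
     distr (density (PiM {1..<N} (\<lambda>_. lborel))
              (\<lambda>y. ennreal (indicator (simplexS E N) (hyp_param E N y)
                    * (\<Prod>i\<in>{1..N}. gamma_dens \<gamma> (hyp_param E N y i)))))
           (PiM {1..N} (\<lambda>_. lborel)) (hyp_param E N)"

definition nu_cond :: "real \<Rightarrow> real \<Rightarrow> nat \<Rightarrow> (nat \<Rightarrow> real) measure" where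
  "nu_cond \<gamma> E N =
     scale_measure (1 / emeasure (nu_unnorm \<gamma> E N) (space (nu_unnorm \<gamma> E N)))
                   (nu_unnorm \<gamma> E N)"

definition beta_law :: "real \<Rightarrow> real measure" where
  "beta_law \<gamma> = density lborel
     (\<lambda>a. ennreal (indicator {0..1} a * a powr (\<gamma> - 1) * (1 - a) powr (\<gamma> - 1) / Beta \<gamma> \<gamma>))"

definition T_op :: "nat \<Rightarrow> nat \<Rightarrow> real \<Rightarrow> (nat \<Rightarrow> real) \<Rightarrow> (nat \<Rightarrow> real)" where
  "T_op i j \<alpha> x = x(i := \<alpha> * (x i + x j), j := (1 - \<alpha>) * (x i + x j))"

definition E_op :: "real \<Rightarrow> nat \<Rightarrow> nat \<Rightarrow> ((nat \<Rightarrow> real) \<Rightarrow> real) \<Rightarrow> (nat \<Rightarrow> real) \<Rightarrow> real" where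
  "E_op \<gamma> i j f x = (\<integral>\<alpha>. f (T_op i j \<alpha> x) \<partial>beta_law \<gamma>)"

definition D_op :: "real \<Rightarrow> nat \<Rightarrow> nat \<Rightarrow> ((nat \<Rightarrow> real) \<Rightarrow> real) \<Rightarrow> (nat \<Rightarrow> real) \<Rightarrow> real" where
  "D_op \<gamma> i j f x = E_op \<gamma> i j f x - f x"

definition dirichlet :: "real \<Rightarrow> real \<Rightarrow> real \<Rightarrow> nat \<Rightarrow> ((nat \<Rightarrow> real) \<Rightarrow> real) \<Rightarrow> ennreal" where
  "dirichlet \<gamma> m E N f = (\<Sum>i\<in>{1..<N}.
      \<integral>\<^sup>+ x. ennreal ((x i + x (Suc i)) powr m * (D_op \<gamma> i (Suc i) f x)\<^sup>2) \<partial>nu_cond \<gamma> E N)"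

definition lambda_star :: "real \<Rightarrow> real \<Rightarrow> real \<Rightarrow> nat \<Rightarrow> ennreal" where
  "lambda_star \<gamma> m E N = (INF f \<in> {f. f \<in> borel_measurable (nu_cond \<gamma> E N)
        \<and> integrable (nu_cond \<gamma> E N) (\<lambda>x. (f x)\<^sup>2)
        \<and> (\<integral>x. f x \<partial>nu_cond \<gamma> E N) = 0
        \<and> (\<integral>x. (f x)\<^sup>2 \<partial>nu_cond \<gamma> E N) \<noteq> 0}.
      dirichlet \<gamma> m E N f / ennreal (\<integral>x. (f x)\<^sup>2 \<partial>nu_cond \<gamma> E N))"

definition kappa :: "real \<Rightarrow> real \<Rightarrow> ennreal" where
  "kappa \<gamma> m = lambda_star \<gamma> m (1/3) 3"

end

theory Submission
  imports Defs "HOL-Probability.Probability"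
begin


lemma set12: "{1..<3::nat} = {1,2}" by auto
lemma set123: "{1..3::nat} = {1,2,3}" by auto

lemma hp_1: "hyp_param (1/3) 3 y 1 = y 1" by (simp add: hyp_param_def)
lemma hp_1': "hyp_param (1/3) 3 y (Suc 0) = y (Suc 0)" by (simp add: hyp_param_def)
lemma hp_2: "hyp_param (1/3) 3 y 2 = y 2" by (simp add: hyp_param_def)
lemma hp_3: "hyp_param (1/3) 3 y 3 = 1 - y 1 - y 2"
  unfolding hyp_param_def set12 by simp

definition RR :: "real \<Rightarrow> real \<Rightarrow> real \<Rightarrow> real" where
  "RR g a b = (if 0 < a \<and> 0 < b \<and> 0 < 1 - a - b then gamma_dens g a * gamma_dens g b * gamma_dens g (1 - a - b) else 0)"

lemma rho_eq: "indicator (simplexS (1/3) 3) (hyp_param (1/3) 3 y) * (\<Prod>i\<in>{1..3}. gamma_dens g (hyp_param (1/3) 3 y i))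
   = RR g (y 1) (y 2)"
proof -
  have pe: "hyp_param (1/3) 3 y \<in> PiE {1..3} (\<lambda>_. UNIV)"
    by (auto simp: hyp_param_def PiE_def extensional_def)
  have mem: "hyp_param (1/3) 3 y \<in> simplexS (1/3) 3 \<longleftrightarrow> (0 < y 1 \<and> 0 < y 2 \<and> 0 < 1 - y 1 - y 2)"
    using pe unfolding simplexS_def set123 by (simp add: hp_1 hp_1' hp_2 hp_3)
  show ?thesis using mem unfolding RR_def indicator_def set123 by (simp add: hp_1 hp_1' hp_2 hp_3)
qed



abbreviation "P2 \<equiv> (lborel \<Otimes>\<^sub>M lborel :: (real \<times> real) measure)"

lemma pair_swap:
  fixes F :: "real \<Rightarrow> real \<Rightarrow> ennreal"
  assumes [measurable]: "case_prod F \<in> borel_measurable P2"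
  shows "(\<integral>\<^sup>+ z. F (snd z) (fst z) \<partial>P2) = (\<integral>\<^sup>+ z. F (fst z) (snd z) \<partial>P2)"
proof -
  have m2: "(\<lambda>z. F (snd z) (fst z)) \<in> borel_measurable P2" by measurable
  have "(\<integral>\<^sup>+ z. F (snd z) (fst z) \<partial>P2) = (\<integral>\<^sup>+ x. \<integral>\<^sup>+ y. F y x \<partial>lborel \<partial>lborel)"
    using lborel.nn_integral_fst[OF m2] by simp
  also have "\<dots> = (\<integral>\<^sup>+ y. \<integral>\<^sup>+ x. F y x \<partial>lborel \<partial>lborel)"
    by (rule lborel_pair.Fubini'[symmetric]) (use m2 in \<open>simp add: case_prod_unfold\<close>)
  also have "\<dots> = (\<integral>\<^sup>+ z. F (fst z) (snd z) \<partial>P2)"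
    using lborel.nn_integral_fst[of "\<lambda>z. F (fst z) (snd z)"] by simp
  finally show ?thesis .
qed

definition hh :: "real \<Rightarrow> real \<Rightarrow> real" where
  "hh q t = indicator {0..1} t * t powr q"

lemma hh_nonneg: "0 \<le> hh q t" by (simp add: hh_def)

lemma hh_meas[measurable]: "hh q \<in> borel_measurable borel"
  unfolding hh_def by measurable

lemma I_val: assumes "q > -1"
  shows "(\<integral>\<^sup>+ t. ennreal (hh q t) \<partial>lborel) = ennreal (1 / (q + 1))"
proof -
  have "((\<lambda>x. x powr q) has_integral (1 powr (q+1) / (q+1))) {0..1}"
    by (rule has_integral_powr_from_0) (use assms in auto)
  hence "((\<lambda>x. x powr q) has_integral (1 / (q+1))) {0..1}" by simp
  hence "(hh q has_integral (1 / (q+1))) UNIV"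
  proof -
    have eq: "hh q = (\<lambda>x. if x \<in> {0..1} then x powr q else 0)" by (auto simp: hh_def fun_eq_iff)
    show ?thesis unfolding eq has_integral_restrict_UNIV by fact
  qed
  from nn_integral_has_integral_lborel[OF hh_meas hh_nonneg this] show ?thesis .
qed



lemma gd_pos: "0 < g \<Longrightarrow> 0 < x \<Longrightarrow> 0 < gamma_dens g x"
  by (simp add: gamma_dens_def)
lemma gd_nonneg: "0 < g \<Longrightarrow> 0 \<le> gamma_dens g x"
  by (simp add: gamma_dens_def)

lemma RR_nonneg: "0 < g \<Longrightarrow> 0 \<le> RR g a b"
  by (simp add: RR_def gd_nonneg)
lemma RR_pos: "0 < g \<Longrightarrow> 0 < a \<Longrightarrow> 0 < b \<Longrightarrow> 0 < 1 - a - b \<Longrightarrow> 0 < RR g a b"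
  by (simp add: RR_def gd_pos)
lemma RR_sym: "RR g a b = RR g b a"
  unfolding RR_def by (auto simp: algebra_simps)

lemma RR_meas[measurable]: "(\<lambda>z. RR g (fst z) (snd z)) \<in> borel_measurable P2"
  unfolding RR_def gamma_dens_def by measurable

lemma gd_le: assumes "0 < g" "0 < x" "x \<le> 1"
  shows "gamma_dens g x \<le> x powr (min (g-1) 0) / Gamma g"
proof -
  have "x powr (g - 1) * exp (- x) \<le> x powr (g-1) * 1"
    by (intro mult_left_mono) (use assms in auto)
  also have "\<dots> \<le> x powr (min (g-1) 0)"
    using powr_mono'[of "min (g-1) 0" "g-1" x] assms by simp
  finally show ?thesis using assms by (simp add: gamma_dens_def divide_right_mono)
qed

lemma three_bound:
  fixes a b c q :: real
  assumes "0 < a" "0 < b" "0 < c" "a + b + c = 1" "q \<le> 0"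
  shows "a powr q * b powr q * c powr q \<le> (1/3) powr q * (a powr q * b powr q + a powr q * c powr q + b powr q * c powr q)"
proof -
  have pa: "0 < a powr q" "0 < b powr q" "0 < c powr q" using assms by auto
  have le: "x powr q \<le> (1/3) powr q" if "1/3 \<le> x" for x
    using powr_mono2'[of q "1/3" x] assms that by simp
  consider "1/3 \<le> a" | "1/3 \<le> b" | "1/3 \<le> c" using assms by linarith
  then show ?thesis
  proof cases
    case 1
    have "a powr q * b powr q * c powr q = a powr q * (b powr q * c powr q)" by simp
    also have "\<dots> \<le> (1/3) powr q * (b powr q * c powr q)"
      by (rule mult_right_mono[OF le[OF 1]]) (use pa in auto)
    also have "\<dots> \<le> (1/3) powr q * (a powr q * b powr q + a powr q * c powr q + b powr q * c powr q)"
      by (rule mult_left_mono) (use pa in auto)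
    finally show ?thesis .
  next
    case 2
    have "a powr q * b powr q * c powr q = b powr q * (a powr q * c powr q)" by simp
    also have "\<dots> \<le> (1/3) powr q * (a powr q * c powr q)"
      by (rule mult_right_mono[OF le[OF 2]]) (use pa in auto)
    also have "\<dots> \<le> (1/3) powr q * (a powr q * b powr q + a powr q * c powr q + b powr q * c powr q)"
      by (rule mult_left_mono) (use pa in auto)
    finally show ?thesis .
  next
    case 3
    have "a powr q * b powr q * c powr q = c powr q * (a powr q * b powr q)" by simp
    also have "\<dots> \<le> (1/3) powr q * (a powr q * b powr q)"
      by (rule mult_right_mono[OF le[OF 3]]) (use pa in auto)
    also have "\<dots> \<le> (1/3) powr q * (a powr q * b powr q + a powr q * c powr q + b powr q * c powr q)"
      by (rule mult_left_mono) (use pa in auto)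
    finally show ?thesis .
  qed
qed

definition GG :: "real \<Rightarrow> real \<Rightarrow> real \<Rightarrow> real" where
  "GG q a b = hh q a * hh q b + hh q a * hh q (1 - a - b) + hh q b * hh q (1 - a - b)"

lemma RR_le: assumes "0 < g"
  shows "RR g a b \<le> ((1/3) powr (min (g-1) 0) / Gamma g ^ 3) * GG (min (g-1) 0) a b"
proof (cases "0 < a \<and> 0 < b \<and> 0 < 1 - a - b")
  case False
  have "0 \<le> GG (min (g-1) 0) a b" by (simp add: GG_def hh_nonneg)
  moreover have "0 \<le> (1/3) powr (min (g-1) 0) / Gamma g ^ 3" using assms by simp
  ultimately have "0 \<le> ((1/3) powr (min (g-1) 0) / Gamma g ^ 3) * GG (min (g-1) 0) a b" by (rule mult_nonneg_nonneg[OF _ _, rotated])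
  moreover have "RR g a b = 0" unfolding RR_def using False by (rule if_not_P)
  ultimately show ?thesis by simp
next
  case True
  define q where "q = min (g-1) 0"
  define c where "c = 1 - a - b"
  have pos: "0 < a" "0 < b" "0 < c" "a \<le> 1" "b \<le> 1" "c \<le> 1" using True by (auto simp: c_def)
  have Gp: "0 < Gamma g" using assms by simp
  have h: "hh q a = a powr q" "hh q b = b powr q" "hh q c = c powr q" using pos by (auto simp: hh_def)
  have "RR g a b = gamma_dens g a * gamma_dens g b * gamma_dens g c" using True by (simp add: RR_def c_def)
  also have "\<dots> \<le> (a powr q / Gamma g) * (b powr q / Gamma g) * (c powr q / Gamma g)"
    unfolding q_def
    by (intro mult_mono gd_le gd_nonneg mult_nonneg_nonneg divide_nonneg_nonneg) (use pos assms in auto)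
  also have "\<dots> = (a powr q * b powr q * c powr q) / Gamma g ^ 3" by (simp add: power3_eq_cube)
  also have "\<dots> \<le> ((1/3) powr q * (a powr q * b powr q + a powr q * c powr q + b powr q * c powr q)) / Gamma g ^ 3"
    by (intro divide_right_mono three_bound) (use pos Gp in \<open>auto simp: c_def q_def\<close>)
  also have "\<dots> = ((1/3) powr q / Gamma g ^ 3) * GG q a b"
    by (simp add: GG_def h[unfolded c_def] c_def)
  finally show ?thesis by (simp add: q_def)
qed



lemma int_G1: assumes "q > -1"
  shows "(\<integral>\<^sup>+ z. ennreal (hh q (fst z) * hh q (snd z)) \<partial>P2) = ennreal (1/(q+1)) * ennreal (1/(q+1))"
proof -
  have "(\<integral>\<^sup>+ z. ennreal (hh q (fst z) * hh q (snd z)) \<partial>P2)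
      = (\<integral>\<^sup>+ x. \<integral>\<^sup>+ y. ennreal (hh q x) * ennreal (hh q y) \<partial>lborel \<partial>lborel)"
    by (subst lborel.nn_integral_fst[symmetric]) (auto simp: ennreal_mult hh_nonneg)
  also have "\<dots> = (\<integral>\<^sup>+ x. ennreal (hh q x) * ennreal (1/(q+1)) \<partial>lborel)"
    by (simp add: nn_integral_cmult I_val[OF assms])
  also have "\<dots> = ennreal (1/(q+1)) * ennreal (1/(q+1))"
    by (simp add: nn_integral_multc I_val[OF assms])
  finally show ?thesis .
qed

lemma I_shift: assumes "q > -1"
  shows "(\<integral>\<^sup>+ y. ennreal (hh q (t - y)) \<partial>lborel) = ennreal (1/(q+1))"
proof -
  have "(\<integral>\<^sup>+ y. ennreal (hh q y) \<partial>lborel) = ennreal \<bar>-1\<bar> * (\<integral>\<^sup>+ y. ennreal (hh q (t + (-1) * y)) \<partial>lborel)"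
    by (rule nn_integral_real_affine) auto
  then show ?thesis using I_val[OF assms] by simp
qed

lemma int_G2: assumes "q > -1"
  shows "(\<integral>\<^sup>+ z. ennreal (hh q (fst z) * hh q (1 - fst z - snd z)) \<partial>P2) = ennreal (1/(q+1)) * ennreal (1/(q+1))"
proof -
  have "(\<integral>\<^sup>+ z. ennreal (hh q (fst z) * hh q (1 - fst z - snd z)) \<partial>P2)
      = (\<integral>\<^sup>+ x. \<integral>\<^sup>+ y. ennreal (hh q x) * ennreal (hh q ((1 - x) - y)) \<partial>lborel \<partial>lborel)"
    by (subst lborel.nn_integral_fst[symmetric]) (auto simp: ennreal_mult hh_nonneg)
  also have "\<dots> = (\<integral>\<^sup>+ x. ennreal (hh q x) * ennreal (1/(q+1)) \<partial>lborel)"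
    by (simp add: nn_integral_cmult I_shift[OF assms])
  also have "\<dots> = ennreal (1/(q+1)) * ennreal (1/(q+1))"
    by (simp add: nn_integral_multc I_val[OF assms])
  finally show ?thesis .
qed

lemma int_G3: assumes "q > -1"
  shows "(\<integral>\<^sup>+ z. ennreal (hh q (snd z) * hh q (1 - fst z - snd z)) \<partial>P2) = ennreal (1/(q+1)) * ennreal (1/(q+1))"
proof -
  have "(\<integral>\<^sup>+ z. ennreal (hh q (snd z) * hh q (1 - fst z - snd z)) \<partial>P2)
     = (\<integral>\<^sup>+ z. (\<lambda>a b. ennreal (hh q a * hh q (1 - a - b))) (snd z) (fst z) \<partial>P2)"
    by (simp add: algebra_simps)
  also have "\<dots> = (\<integral>\<^sup>+ z. (\<lambda>a b. ennreal (hh q a * hh q (1 - a - b))) (fst z) (snd z) \<partial>P2)"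
    by (rule pair_swap) (simp add: case_prod_unfold)
  finally show ?thesis using int_G2[OF assms] by simp
qed

lemma Z_fin: assumes "0 < g"
  shows "(\<integral>\<^sup>+ z. ennreal (RR g (fst z) (snd z)) \<partial>P2) < \<infinity>"
proof -
  define q where "q = min (g-1) 0"
  define K where "K = (1/3) powr q / Gamma g ^ 3"
  have q: "q > -1" using assms by (simp add: q_def)
  have K: "0 \<le> K" using assms by (simp add: K_def)
  have "(\<integral>\<^sup>+ z. ennreal (RR g (fst z) (snd z)) \<partial>P2) \<le> (\<integral>\<^sup>+ z. ennreal (K * GG q (fst z) (snd z)) \<partial>P2)"
    by (intro nn_integral_mono ennreal_leI) (use RR_le[OF assms] in \<open>simp add: K_def q_def\<close>)
  also have "\<dots> = ennreal K * ((\<integral>\<^sup>+ z. ennreal (hh q (fst z) * hh q (snd z)) \<partial>P2)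
      + (\<integral>\<^sup>+ z. ennreal (hh q (fst z) * hh q (1 - fst z - snd z)) \<partial>P2)
      + (\<integral>\<^sup>+ z. ennreal (hh q (snd z) * hh q (1 - fst z - snd z)) \<partial>P2))"
    using K by (simp add: GG_def ennreal_mult ennreal_plus hh_nonneg nn_integral_cmult nn_integral_add)
  also have "\<dots> < \<infinity>" using int_G1[OF q] int_G2[OF q] int_G3[OF q]
    by (simp add: ennreal_mult_less_top ennreal_mult[symmetric] ennreal_plus[symmetric])
  finally show ?thesis .
qed

lemma box_pos:
  fixes F :: "real \<times> real \<Rightarrow> real"
  assumes [measurable]: "F \<in> borel_measurable P2"
    and pos: "\<And>x y. x \<in> {a1..a2} \<Longrightarrow> y \<in> {b1..b2} \<Longrightarrow> 0 < F (x, y)"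
    and ab: "a1 < a2" "b1 < b2"
  shows "0 < (\<integral>\<^sup>+ z. ennreal (F z) \<partial>P2)"
proof (rule ccontr)
  assume "\<not> ?thesis"
  hence "(\<integral>\<^sup>+ z. ennreal (F z) \<partial>P2) = 0" by simp
  hence "AE z in P2. ennreal (F z) = 0" by (subst (asm) nn_integral_0_iff_AE) auto
  hence "AE z in P2. z \<notin> {a1..a2} \<times> {b1..b2}"
  proof eventually_elim
    case (elim z)
    show ?case
    proof
      assume "z \<in> {a1..a2} \<times> {b1..b2}"
      then obtain x y where "z = (x, y)" "x \<in> {a1..a2}" "y \<in> {b1..b2}" by auto
      with pos have "0 < F z" by auto
      with elim show False by simp
    qed
  qed
  hence "emeasure P2 ({a1..a2} \<times> {b1..b2}) = 0"
    by (subst (asm) AE_iff_measurable[where N="{a1..a2} \<times> {b1..b2}"]) (auto simp: space_pair_measure)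
  moreover have "emeasure P2 ({a1..a2} \<times> {b1..b2}) = ennreal (a2 - a1) * ennreal (b2 - b1)"
    using ab by (simp add: lborel.emeasure_pair_measure_Times)
  ultimately show False using ab by (simp add: ennreal_mult[symmetric])
qed



abbreviation "MM \<equiv> PiM {1..<3::nat} (\<lambda>_. lborel :: real measure)"
abbreviation "PP \<equiv> PiM {1..3::nat} (\<lambda>_. lborel :: real measure)"
abbreviation "hp \<equiv> hyp_param (1/3) 3"

lemma hp_meas[measurable]: "hp \<in> measurable MM PP"
  unfolding hyp_param_def
  apply (rule measurable_PiM_single')
  subgoal for i
    apply (cases "i \<in> {1..<3}")
     apply simp
    apply (cases "i = 3")
     apply simp
    apply simp
    done
  apply (auto simp: PiE_def extensional_def)
  done

interpretation psf: product_sigma_finite "\<lambda>_::nat. lborel :: real measure"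
  by standard

lemma transfer:
  fixes F :: "real \<Rightarrow> real \<Rightarrow> ennreal"
  assumes "(\<lambda>z. F (fst z) (snd z)) \<in> borel_measurable P2"
  shows "(\<integral>\<^sup>+ y. F (y 1) (y 2) \<partial>MM) = (\<integral>\<^sup>+ z. F (fst z) (snd z) \<partial>P2)"
proof -
  have "{1..<3::nat} = {1,2}" by auto
  moreover have "(\<integral>\<^sup>+ y. F (y 1) (y 2) \<partial>PiM {1,2::nat} (\<lambda>_. lborel)) = (\<integral>\<^sup>+ z. F (fst z) (snd z) \<partial>P2)"
    by (rule psf.product_nn_integral_pair) (use assms in \<open>simp_all add: case_prod_unfold\<close>)
  ultimately show ?thesis by simp
qed

lemma RR_meas2[measurable]: "(\<lambda>y. RR g (y 1) (y 2)) \<in> borel_measurable MM"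
  unfolding RR_def gamma_dens_def by measurable

lemma unnorm_eq: "nu_unnorm g (1/3) 3 = distr (density MM (\<lambda>y. ennreal (RR g (y 1) (y 2)))) PP hp"
  unfolding nu_unnorm_def rho_eq by simp

lemma nn_unnorm:
  assumes [measurable]: "f \<in> borel_measurable PP"
  shows "(\<integral>\<^sup>+ x. f x \<partial>nu_unnorm g (1/3) 3) = (\<integral>\<^sup>+ y. ennreal (RR g (y 1) (y 2)) * f (hp y) \<partial>MM)"
proof -
  have m1: "f \<in> borel_measurable (distr (density MM (\<lambda>y. ennreal (RR g (y 1) (y 2)))) PP hp)"
    using assms by (simp only: measurable_distr_eq1)
  have hpm: "hp \<in> measurable (density MM (\<lambda>y. ennreal (RR g (y 1) (y 2)))) PP"
    using hp_meas by (simp only: measurable_density_eq1)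
  have dm: "(\<lambda>y. ennreal (RR g (y 1) (y 2))) \<in> borel_measurable MM" by measurable
  have fm: "(\<lambda>y. f (hp y)) \<in> borel_measurable MM" by measurable
  show ?thesis unfolding unnorm_eq
    by (subst nn_integral_distr[OF hpm m1]) (rule nn_integral_density[OF dm fm])
qed

lemma Z_eq: "emeasure (nu_unnorm g (1/3) 3) (space (nu_unnorm g (1/3) 3)) = (\<integral>\<^sup>+ z. ennreal (RR g (fst z) (snd z)) \<partial>P2)"
proof -
  have "emeasure (nu_unnorm g (1/3) 3) (space (nu_unnorm g (1/3) 3)) = (\<integral>\<^sup>+ x. 1 \<partial>nu_unnorm g (1/3) 3)"
    by (simp add: nn_integral_const)
  also have "\<dots> = (\<integral>\<^sup>+ y. ennreal (RR g (y 1) (y 2)) \<partial>MM)"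
    by (subst nn_unnorm) simp_all
  also have "\<dots> = (\<integral>\<^sup>+ z. ennreal (RR g (fst z) (snd z)) \<partial>P2)"
    by (rule transfer[where F="\<lambda>a b. ennreal (RR g a b)"]) simp
  finally show ?thesis .
qed



lemma Beta_pos: "0 < g \<Longrightarrow> 0 < Beta g (g::real)"
  by (simp add: Beta_altdef rGamma_inverse_Gamma)

definition bd :: "real \<Rightarrow> real \<Rightarrow> real" where
  "bd g a = indicator {0..1} a * a powr (g - 1) * (1 - a) powr (g - 1) / Beta g g"

lemma bd_meas[measurable]: "bd g \<in> borel_measurable borel"
  unfolding bd_def by measurable

lemma bd_nonneg: "0 < g \<Longrightarrow> 0 \<le> bd g a"
  using Beta_pos[of g] by (simp add: bd_def)

lemma beta_eq: "beta_law g = density lborel (\<lambda>a. ennreal (bd g a))"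
  unfolding beta_law_def bd_def ..

lemma bd_int: assumes "0 < g"
  shows "(\<integral>\<^sup>+ a. ennreal (bd g a) \<partial>lborel) = 1"
proof -
  have "((\<lambda>t. t powr (g - 1) * (1 - t) powr (g - 1)) has_integral Beta g g) {0..1}"
    by (rule has_integral_Beta_real) (use assms in auto)
  hence "((\<lambda>t. t powr (g - 1) * (1 - t) powr (g - 1) / Beta g g) has_integral (Beta g g / Beta g g)) {0..1}"
    by (rule has_integral_divide)
  hence h1: "((\<lambda>t. t powr (g - 1) * (1 - t) powr (g - 1) / Beta g g) has_integral 1) {0..1}"
    using Beta_pos[OF assms] by simp
  have eq: "bd g = (\<lambda>x. if x \<in> {0..1} then x powr (g - 1) * (1 - x) powr (g - 1) / Beta g g else 0)"
    by (auto simp: bd_def fun_eq_iff)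
  have "(bd g has_integral 1) UNIV" unfolding eq has_integral_restrict_UNIV by (rule h1)
  from nn_integral_has_integral_lborel[OF bd_meas bd_nonneg[OF assms] this] show ?thesis by simp
qed

lemma beta_prob: "0 < g \<Longrightarrow> prob_space (beta_law g)"
  unfolding beta_eq by (rule prob_spaceI) (simp add: emeasure_density bd_int)

lemma beta_AE: "0 < g \<Longrightarrow> AE a in beta_law g. 0 \<le> a \<and> a \<le> 1"
  unfolding beta_eq by (subst AE_density) (auto simp: bd_def intro!: AE_I2 split: split_indicator)

lemma beta_integrable: assumes "0 < g" shows "integrable (beta_law g) (\<lambda>a. a)"
proof -
  interpret prob_space "beta_law g" by (rule beta_prob[OF assms])
  show ?thesis
    by (rule integrable_const_bound[where B=1]) (use beta_AE[OF assms] in \<open>auto simp: beta_eq\<close>)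
qed

lemma beta_mean: assumes "0 < g" shows "(\<integral>a. a \<partial>beta_law g) = 1/2"
proof -
  have h0: "((\<lambda>t. t powr (g + 1 - 1) * (1 - t) powr (g - 1)) has_integral Beta (g+1) g) {0..1}"
    by (rule has_integral_Beta_real) (use assms in auto)
  have BB: "(g + g) * Beta (g + 1) g = g * Beta g g"
    by (rule Beta_plus1_left) (use assms in \<open>auto dest: nonpos_Ints_nonpos\<close>)
  hence BB': "Beta (g+1) g / Beta g g = 1/2" using assms Beta_pos[OF assms]
    by (simp add: field_simps)
  have "((\<lambda>t. t powr (g + 1 - 1) * (1 - t) powr (g - 1) / Beta g g) has_integral (Beta (g+1) g / Beta g g)) {0..1}"
    by (rule has_integral_divide[OF h0])
  hence h1: "((\<lambda>t. t powr (g + 1 - 1) * (1 - t) powr (g - 1) / Beta g g) has_integral 1/2) {0..1}"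
    using BB' by simp
  have eq: "(\<lambda>a. bd g a * a) = (\<lambda>x. if x \<in> {0..1} then x powr (g + 1 - 1) * (1 - x) powr (g - 1) / Beta g g else 0)"
  proof
    fix x
    show "bd g x * x = (if x \<in> {0..1} then x powr (g + 1 - 1) * (1 - x) powr (g - 1) / Beta g g else 0)"
    proof (cases "x = 0")
      case False
      show ?thesis
      proof (cases "x \<in> {0..1}")
        case True
        then have xp: "0 < x" using False by auto
        have "x powr (g + 1 - 1) = x powr ((g - 1) + 1)" by simp
        also have "\<dots> = x powr (g - 1) * x powr 1" by (rule powr_add)
        also have "\<dots> = x powr (g - 1) * x" using xp by simp
        finally show ?thesis using True by (simp add: bd_def)
      qed (auto simp: bd_def)
    qed (simp add: bd_def)
  qed
  have "((\<lambda>a. bd g a * a) has_integral 1/2) UNIV" unfolding eq has_integral_restrict_UNIV by (rule h1)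
  moreover have nnb: "0 \<le> bd g x * x" for x
  proof (cases "x \<in> {0..1}")
    case True then show ?thesis using bd_nonneg[OF assms, of x] by simp
  qed (simp add: bd_def)
  moreover have mb: "(\<lambda>a. bd g a * a) \<in> borel_measurable borel" by measurable
  ultimately have nn: "(\<integral>\<^sup>+ a. ennreal (bd g a * a) \<partial>lborel) = ennreal (1/2)"
    using nn_integral_has_integral_lborel[OF mb nnb] by blast
  have "(\<integral>a. a \<partial>beta_law g) = enn2real (\<integral>\<^sup>+ a. ennreal a \<partial>beta_law g)"
    by (rule integral_eq_nn_integral) (use beta_AE[OF assms] in \<open>auto simp: beta_eq\<close>)
  also have "(\<integral>\<^sup>+ a. ennreal a \<partial>beta_law g) = (\<integral>\<^sup>+ a. ennreal (bd g a) * ennreal a \<partial>lborel)"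
    unfolding beta_eq by (rule nn_integral_density) auto
  also have "\<dots> = (\<integral>\<^sup>+ a. ennreal (bd g a * a) \<partial>lborel)"
    by (rule nn_integral_cong_AE) (auto simp: ennreal_mult' bd_nonneg[OF assms] intro!: AE_I2 split: split_indicator)
  finally show ?thesis using nn by (simp del: ennreal_half add: enn2real_ennreal)
qed



lemma RR_ne0: "RR g a b \<noteq> 0 \<Longrightarrow> 0 < a \<and> 0 < b \<and> 0 < 1 - a - b"
  unfolding RR_def by (auto split: if_splits)

lemma Z_pos: assumes "0 < g"
  shows "0 < emeasure (nu_unnorm g (1/3) 3) (space (nu_unnorm g (1/3) 3))"
  unfolding Z_eq
  by (rule box_pos[of "\<lambda>z. RR g (fst z) (snd z)" "1/10" "2/10" "1/10" "2/10"])
     (auto intro!: RR_pos assms)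

lemma Z_finite: assumes "0 < g"
  shows "emeasure (nu_unnorm g (1/3) 3) (space (nu_unnorm g (1/3) 3)) < \<infinity>"
  unfolding Z_eq by (rule Z_fin[OF assms])

lemma sets_nu: "sets (nu_cond g (1/3) 3) = sets PP"
  unfolding nu_cond_def unnorm_eq by simp

lemma space_nu: "space (nu_cond g (1/3) 3) = space PP"
  using sets_eq_imp_space_eq[OF sets_nu] .

lemma nu_prob: assumes "0 < g" shows "prob_space (nu_cond g (1/3) 3)"
proof
  define Z where "Z = emeasure (nu_unnorm g (1/3) 3) (space (nu_unnorm g (1/3) 3))"
  have Z: "0 < Z" "Z < \<infinity>" using Z_pos[OF assms] Z_finite[OF assms] by (simp_all add: Z_def)
  have "emeasure (nu_cond g (1/3) 3) (space (nu_cond g (1/3) 3)) = 1 / Z * Z"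
    unfolding nu_cond_def Z_def by (simp add: space_scale_measure)
  also have "\<dots> = 1" using Z by (simp add: ennreal_divide_times)
  finally show "emeasure (nu_cond g (1/3) 3) (space (nu_cond g (1/3) 3)) = 1" .
qed

lemma nn_nu: assumes [measurable]: "f \<in> borel_measurable PP"
  shows "(\<integral>\<^sup>+ x. f x \<partial>nu_cond g (1/3) 3) = 1 / emeasure (nu_unnorm g (1/3) 3) (space (nu_unnorm g (1/3) 3))
     * (\<integral>\<^sup>+ y. ennreal (RR g (y 1) (y 2)) * f (hp y) \<partial>MM)"
proof -
  have m: "f \<in> borel_measurable (nu_unnorm g (1/3) 3)"
    unfolding unnorm_eq using assms by (simp only: measurable_distr_eq1)
  show ?thesis unfolding nu_cond_def nn_integral_scale_measure[OF m] nn_unnorm[OF assms] ..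
qed

lemma nu_AE: assumes "0 < g"
  shows "AE x in nu_cond g (1/3) 3. 0 < x 1 \<and> 0 < x 2 \<and> 0 < x 3 \<and> x 1 + x 2 + x 3 = 1"
proof -
  define Bad where "Bad = {x \<in> space PP. \<not> (0 < x 1 \<and> 0 < x 2 \<and> 0 < x 3 \<and> x 1 + x 2 + x 3 = 1)}"
  have Bs: "Bad \<in> sets PP" unfolding Bad_def by measurable
  have z: "ennreal (RR g (y 1) (y 2)) * indicator Bad (hp y) = 0" for y
  proof (cases "RR g (y 1) (y 2) = 0")
    case False
    then have "0 < y 1 \<and> 0 < y 2 \<and> 0 < 1 - y 1 - y 2" by (rule RR_ne0)
    then have "hp y \<notin> Bad" unfolding Bad_def by (simp add: hp_1 hp_1' hp_2 hp_3)
    then show ?thesis by simp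
  qed simp
  have "emeasure (nu_cond g (1/3) 3) Bad = (\<integral>\<^sup>+ x. indicator Bad x \<partial>nu_cond g (1/3) 3)"
    using Bs by (simp add: sets_nu)
  also have "\<dots> = 1 / emeasure (nu_unnorm g (1/3) 3) (space (nu_unnorm g (1/3) 3))
     * (\<integral>\<^sup>+ y. ennreal (RR g (y 1) (y 2)) * indicator Bad (hp y) \<partial>MM)"
    by (rule nn_nu) (use Bs in simp)
  also have "(\<integral>\<^sup>+ y. ennreal (RR g (y 1) (y 2)) * indicator Bad (hp y) \<partial>MM) = 0"
    by (simp only: z) simp
  finally have "emeasure (nu_cond g (1/3) 3) Bad = 1 / emeasure (nu_unnorm g (1/3) 3) (space (nu_unnorm g (1/3) 3)) * 0" .
  then have "emeasure (nu_cond g (1/3) 3) Bad = 0" by simp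
  then show ?thesis
    by (subst AE_iff_measurable[where N=Bad]) (use Bs in \<open>auto simp: sets_nu space_nu Bad_def\<close>)
qed



lemma sq_ineq: fixes a b c :: real shows "((b - a) / 2)\<^sup>2 \<le> 1/2 * (a - c)\<^sup>2 + 1/2 * (b - c)\<^sup>2"
proof -
  have "1/2 * (a - c)\<^sup>2 + 1/2 * (b - c)\<^sup>2 - ((b - a) / 2)\<^sup>2 = ((a + b - 2*c)/2)\<^sup>2"
    by (simp add: power2_eq_square field_simps)
  moreover have "0 \<le> ((a + b - 2*c)/2)\<^sup>2" by simp
  ultimately show ?thesis by linarith
qed

lemma meas_nu: "h \<in> borel_measurable PP \<Longrightarrow> h \<in> borel_measurable (nu_cond g (1/3) 3)"
  by (subst measurable_cong_sets[OF sets_nu refl])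

lemma dir_eq: "dirichlet g m (1/3) 3 f =
   (\<integral>\<^sup>+ x. ennreal ((x 1 + x 2) powr m * (D_op g 1 2 f x)\<^sup>2) \<partial>nu_cond g (1/3) 3) +
   (\<integral>\<^sup>+ x. ennreal ((x 2 + x 3) powr m * (D_op g 2 3 f x)\<^sup>2) \<partial>nu_cond g (1/3) 3)"
  unfolding dirichlet_def set12 by (simp add: numeral_2_eq_2 numeral_3_eq_3)

lemma E23: assumes "0 < g" shows "E_op g 2 3 (\<lambda>x. x 1 - c) x = x 1 - c"
proof -
  interpret prob_space "beta_law g" by (rule beta_prob[OF assms])
  show ?thesis unfolding E_op_def T_op_def by (simp add: prob_space)
qed

lemma E12: assumes "0 < g" shows "E_op g 1 2 (\<lambda>x. x 1 - c) x = (x 1 + x 2) / 2 - c"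
proof -
  interpret prob_space "beta_law g" by (rule beta_prob[OF assms])
  have "E_op g 1 2 (\<lambda>x. x 1 - c) x = (\<integral>a. a * (x 1 + x 2) - c \<partial>beta_law g)"
    unfolding E_op_def T_op_def by simp
  also have "\<dots> = (\<integral>a. a * (x 1 + x 2) \<partial>beta_law g) - (\<integral>a. c \<partial>beta_law g)"
    by (rule Bochner_Integration.integral_diff[of "beta_law g" "\<lambda>a. a * (x 1 + x 2)" "\<lambda>a. c"])
       (use beta_integrable[OF assms] in auto)
  also have "\<dots> = (x 1 + x 2) / 2 - c"
    using beta_mean[OF assms] by (simp add: prob_space)
  finally show ?thesis .
qed



theorem mainTheorem10:
  fixes \<gamma> m :: real
  assumes "0 < \<gamma>" and "0 \<le> m"
  shows "kappa \<gamma> m \<le> 3 / 2"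
proof -
  let ?nu = "nu_cond \<gamma> (1/3) 3"
  let ?Z = "emeasure (nu_unnorm \<gamma> (1/3) 3) (space (nu_unnorm \<gamma> (1/3) 3))"
  have Zp: "0 < ?Z" by (rule Z_pos[OF assms(1)])
  have Zf: "?Z < \<infinity>" by (rule Z_finite[OF assms(1)])
  interpret P: prob_space ?nu by (rule nu_prob[OF assms(1)])
  have AEs: "AE x in ?nu. 0 < x 1 \<and> 0 < x 2 \<and> 0 < x 3 \<and> x 1 + x 2 + x 3 = 1"
    by (rule nu_AE[OF assms(1)])
  have m1: "(\<lambda>x. x 1) \<in> borel_measurable ?nu" by (rule meas_nu) measurable
  have m2: "(\<lambda>x. x 2) \<in> borel_measurable ?nu" by (rule meas_nu) measurable
  have int1: "integrable ?nu (\<lambda>x. x 1)"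
  proof (rule P.integrable_const_bound[where B=1])
    show "AE x in ?nu. norm (x 1) \<le> (1::real)" using AEs by eventually_elim auto
  qed (rule m1)
  define c where "c = (\<integral>x. x 1 \<partial>?nu)"
  define f where "f = (\<lambda>x::nat\<Rightarrow>real. x 1 - c)"
  have mf: "f \<in> borel_measurable ?nu" unfolding f_def using m1 by measurable
  have mean0: "(\<integral>x. f x \<partial>?nu) = 0"
  proof -
    have "(\<integral>x. f x \<partial>?nu) = (\<integral>x. x 1 \<partial>?nu) - (\<integral>x. c \<partial>?nu)"
      unfolding f_def by (rule Bochner_Integration.integral_diff[of ?nu "\<lambda>x. x 1" "\<lambda>x. c"]) (use int1 in auto)
    then show ?thesis by (simp add: P.prob_space c_def)
  qed
  have intf2: "integrable ?nu (\<lambda>x. (f x)\<^sup>2)"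
  proof (rule P.integrable_const_bound[where B="(1 + \<bar>c\<bar>)\<^sup>2"])
    show "AE x in ?nu. norm ((f x)\<^sup>2) \<le> (1 + \<bar>c\<bar>)\<^sup>2" using AEs
    proof eventually_elim
      case (elim x)
      have "\<bar>f x\<bar> \<le> 1 + \<bar>c\<bar>" using elim unfolding f_def by auto
      then have "\<bar>f x\<bar>\<^sup>2 \<le> (1 + \<bar>c\<bar>)\<^sup>2" by (rule power_mono) simp
      then show ?case by simp
    qed
  qed (use mf in measurable)
  define A where "A = (\<integral>\<^sup>+x. ennreal ((f x)\<^sup>2) \<partial>?nu)"
  define B where "B = (\<integral>\<^sup>+x. ennreal ((x 2 - c)\<^sup>2) \<partial>?nu)"
  have A_eq: "A = ennreal (\<integral>x. (f x)\<^sup>2 \<partial>?nu)"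
    unfolding A_def by (rule nn_integral_eq_integral[OF intf2]) simp
  define J1 where "J1 = (\<integral>\<^sup>+ z. ennreal (RR \<gamma> (fst z) (snd z) * (fst z - c)\<^sup>2) \<partial>P2)"
  define J2 where "J2 = (\<integral>\<^sup>+ z. ennreal (RR \<gamma> (fst z) (snd z) * (snd z - c)\<^sup>2) \<partial>P2)"
  have A_tr: "A = 1 / ?Z * J1"
  proof -
    have "A = 1 / ?Z * (\<integral>\<^sup>+ y. ennreal (RR \<gamma> (y 1) (y 2)) * ennreal ((hp y 1 - c)\<^sup>2) \<partial>MM)"
      unfolding A_def f_def by (rule nn_nu) measurable
    also have "(\<integral>\<^sup>+ y. ennreal (RR \<gamma> (y 1) (y 2)) * ennreal ((hp y 1 - c)\<^sup>2) \<partial>MM)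
        = (\<integral>\<^sup>+ y. (\<lambda>a b. ennreal (RR \<gamma> a b * (a - c)\<^sup>2)) (y 1) (y 2) \<partial>MM)"
      by (rule nn_integral_cong) (simp add: hp_1 hp_1' ennreal_mult RR_nonneg[OF assms(1)])
    also have "\<dots> = J1" unfolding J1_def by (rule transfer) measurable
    finally show ?thesis .
  qed
  have B_tr: "B = 1 / ?Z * J2"
  proof -
    have "B = 1 / ?Z * (\<integral>\<^sup>+ y. ennreal (RR \<gamma> (y 1) (y 2)) * ennreal ((hp y 2 - c)\<^sup>2) \<partial>MM)"
      unfolding B_def by (rule nn_nu) measurable
    also have "(\<integral>\<^sup>+ y. ennreal (RR \<gamma> (y 1) (y 2)) * ennreal ((hp y 2 - c)\<^sup>2) \<partial>MM)
        = (\<integral>\<^sup>+ y. (\<lambda>a b. ennreal (RR \<gamma> a b * (b - c)\<^sup>2)) (y 1) (y 2) \<partial>MM)"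
      by (rule nn_integral_cong) (simp add: hp_2 ennreal_mult RR_nonneg[OF assms(1)])
    also have "\<dots> = J2" unfolding J2_def by (rule transfer) measurable
    finally show ?thesis .
  qed
  have J_eq: "J2 = J1"
  proof -
    have "J2 = (\<integral>\<^sup>+ z. (\<lambda>a b. ennreal (RR \<gamma> a b * (a - c)\<^sup>2)) (snd z) (fst z) \<partial>P2)"
      unfolding J2_def by (simp add: RR_sym[of \<gamma> "fst _"])
    also have "\<dots> = J1" unfolding J1_def by (rule pair_swap) measurable
    finally show ?thesis .
  qed
  have BA: "B = A" using A_tr B_tr J_eq by simp
  have J1p: "0 < J1"
  proof (cases "c \<le> 1/4")
    case True
    show ?thesis unfolding J1_def
      by (rule box_pos[of "\<lambda>z. RR \<gamma> (fst z) (snd z) * (fst z - c)\<^sup>2" "3/10" "4/10" "1/10" "2/10"])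
         (use True in \<open>auto intro!: mult_pos_pos RR_pos assms(1) simp: zero_less_power2\<close>)
  next
    case False
    show ?thesis unfolding J1_def
      by (rule box_pos[of "\<lambda>z. RR \<gamma> (fst z) (snd z) * (fst z - c)\<^sup>2" "1/10" "2/10" "1/10" "2/10"])
         (use False in \<open>auto intro!: mult_pos_pos RR_pos assms(1) simp: zero_less_power2\<close>)
  qed
  have Ap: "0 < A" unfolding A_tr using J1p Zf by (simp add: ennreal_zero_less_mult_iff ennreal_zero_less_divide)
  have Af: "A < \<infinity>" unfolding A_eq by simp
  have int_ne0: "(\<integral>x. (f x)\<^sup>2 \<partial>?nu) \<noteq> 0" using Ap A_eq by auto
  have D23: "D_op \<gamma> 2 3 f x = 0" for x
    unfolding D_op_def f_def E23[OF assms(1)] by simp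
  have D12: "D_op \<gamma> 1 2 f x = (x 2 - x 1) / 2" for x
    unfolding D_op_def f_def E12[OF assms(1)] by simp
  have dir: "dirichlet \<gamma> m (1/3) 3 f = (\<integral>\<^sup>+ x. ennreal ((x 1 + x 2) powr m * ((x 2 - x 1) / 2)\<^sup>2) \<partial>?nu)"
    unfolding dir_eq D23 D12 by simp
  have "(\<integral>\<^sup>+ x. ennreal ((x 1 + x 2) powr m * ((x 2 - x 1) / 2)\<^sup>2) \<partial>?nu)
      \<le> (\<integral>\<^sup>+ x. ennreal (1/2) * ennreal ((f x)\<^sup>2) + ennreal (1/2) * ennreal ((x 2 - c)\<^sup>2) \<partial>?nu)"
  proof (rule nn_integral_mono_AE)
    show "AE x in ?nu. ennreal ((x 1 + x 2) powr m * ((x 2 - x 1) / 2)\<^sup>2)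
        \<le> ennreal (1/2) * ennreal ((f x)\<^sup>2) + ennreal (1/2) * ennreal ((x 2 - c)\<^sup>2)"
      using AEs
    proof eventually_elim
      case (elim x)
      have w0: "0 \<le> (x 1 + x 2) powr m" by simp
      have w1: "(x 1 + x 2) powr m \<le> 1" by (rule powr_le1) (use elim assms(2) in auto)
      have sq: "0 \<le> ((x 2 - x 1) / 2)\<^sup>2" by simp
      have "(x 1 + x 2) powr m * ((x 2 - x 1) / 2)\<^sup>2 \<le> 1 * ((x 2 - x 1) / 2)\<^sup>2"
        by (rule mult_right_mono[OF w1 sq])
      also have "\<dots> \<le> 1/2 * (f x)\<^sup>2 + 1/2 * (x 2 - c)\<^sup>2"
        unfolding f_def mult_1 by (rule sq_ineq)
      finally have "ennreal ((x 1 + x 2) powr m * ((x 2 - x 1) / 2)\<^sup>2) \<le> ennreal (1/2 * (f x)\<^sup>2 + 1/2 * (x 2 - c)\<^sup>2)"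
        by (rule ennreal_leI)
      also have "\<dots> = ennreal (1/2) * ennreal ((f x)\<^sup>2) + ennreal (1/2) * ennreal ((x 2 - c)\<^sup>2)"
        by (simp add: ennreal_plus[symmetric] ennreal_mult[symmetric] del: ennreal_half ennreal_plus)
      finally show ?case .
    qed
  qed
  also have "\<dots> = ennreal (1/2) * A + ennreal (1/2) * B"
    unfolding A_def B_def
    by (subst nn_integral_add) (use mf m2 in \<open>simp_all add: nn_integral_cmult\<close>)
  also have "\<dots> = (ennreal (1/2) + ennreal (1/2)) * A" unfolding BA by (simp only: distrib_right)
  also have "ennreal (1/2) + ennreal (1/2) = 1"
    by (simp add: ennreal_plus[symmetric] del: ennreal_half ennreal_plus)
  finally have dirA: "dirichlet \<gamma> m (1/3) 3 f \<le> A" unfolding dir by simp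
  have mem: "f \<in> {f. f \<in> borel_measurable ?nu \<and> integrable ?nu (\<lambda>x. (f x)\<^sup>2)
        \<and> (\<integral>x. f x \<partial>?nu) = 0 \<and> (\<integral>x. (f x)\<^sup>2 \<partial>?nu) \<noteq> 0}"
    using mf intf2 mean0 int_ne0 by blast
  have "kappa \<gamma> m \<le> dirichlet \<gamma> m (1/3) 3 f / ennreal (\<integral>x. (f x)\<^sup>2 \<partial>?nu)"
    unfolding kappa_def lambda_star_def by (rule INF_lower[OF mem])
  also have "\<dots> = dirichlet \<gamma> m (1/3) 3 f / A" unfolding A_eq ..
  also have "\<dots> \<le> A / A" by (rule divide_right_mono_ennreal[OF dirA])
  also have "\<dots> = 1" using Ap Af by simp
  also have "(1::ennreal) \<le> 3 / 2"
  proof -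
    have "(1::ennreal) = 2 / 2" by (simp add: ennreal_divide_self)
    also have "\<dots> \<le> 3 / 2" by (rule divide_right_mono_ennreal) simp
    finally show ?thesis .
  qed
  finally show ?thesis .
qed

end
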